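(* Fix $\widehat\Sigma\subseteq\Sigma$ and a deck $\beta_1,\ldots,\beta_B\in\mathscr{B}$. Let $\sigma\in\Sigma$ satisfy $T^\sigma(\beta_1,\ldots,\beta_B)=T^*(\beta_1,\ldots,\beta_B)$. Let $\mathscr{K}^\sigma_1,\ldots,\mathscr{K}^\sigma_{K^\sigma}$ be the connected components of the graph $\mathscr{G}^\sigma$. For each $k\in\{1,\ldots,K^\sigma\}$ define $\sigma_k:\mathcal{N}\to\mathcal{N}$ by $\sigma_k(i)=\sigma(i)$ if $i\in\mathcal{N}_c$ with $c\in\mathscr{K}^\sigma_k$, and $\sigma_k(i)=i$ otherwise. Then each $\sigma_k$ belongs to $\Sigma$ and satisfies $T^{\sigma_k}(\beta_1,\ldots,\beta_B)=T^*(\beta_1,\ldots,\beta_B)$, and $\bigcup_{k=1}^{K^\sigma}\mathscr{F}(\widehat\Sigma\cup\{\sigma_k\})=\mathscr{F}(\widehat\Sigma\cup\{\sigma\})$.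
   Context: A ballot style consists of contests $\mathcal{C}=\{1,\ldots,C\}$, candidates $\mathcal{N}=\{1,\ldots,N\}$ partitioned into nonempty sets $\mathcal{N}_c$ ($c\in\mathcal{C}$), and positive integers $v_c$. A filled-out ballot is a subset $\beta\subseteq\mathcal{N}$; $\mathscr{B}=\{\beta\subseteq\mathcal{N}: |\mathcal{N}_c\cap\beta|\le v_c\ \forall c\}$. For $i\in\mathcal{N}_c$: $T^*_i(\beta_1,\ldots,\beta_B)=\sum_{b=1}^B\mathbb{I}\{i\in\beta_b\text{ and }|\mathcal{N}_c\cap\beta_b|\le v_c\}$, and for a bijection $\sigma$ of $\mathcal{N}$, $T^\sigma_i(\beta_1,\ldots,\beta_B)=\sum_{b=1}^B\mathbb{I}\{\sigma(i)\in\beta_b\text{ and }|\{\sigma(j)\in\beta_b: j\in\mathcal{N}_c\}|\le v_c\}$. $\Sigma$ is the set of non-identity bijections $\mathcal{N}\to\mathcal{N}$. For $\widehat\Sigma\subseteq\Sigma$, $\mathscr{F}(\widehat\Sigma)$ is the set of all tuples $(\beta_1,\ldots,\beta_{B'})$, over all $B'\in\mathbb{N}$, with each $\beta_b\in\mathscr{B}$ and $T^{\tau}(\beta_1,\ldots,\beta_{B'})\neq T^*(\beta_1,\ldots,\beta_{B'})$ for all $\tau\in\widehat\Sigma$. For $\sigma\in\Sigma$, $\mathscr{G}^\sigma=(\mathscr{V}^\sigma,\mathscr{E}^\sigma)$ is the undirected graph with vertex set $\mathscr{V}^\sigma=\{c\in\mathcal{C}:\exists i\in\mathcal{N}_c,\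 \sigma(i)\neq i\}$ and edge set $\mathscr{E}^\sigma=\{(c,c'): \exists i\in\mathcal{N}_c, i'\in\mathcal{N}_{c'}\text{ with }\sigma(i)=i'\text{ or }\sigma(i')=i\}$. *)

theory Defs
  imports Main
begin

text \<open>Ballot style: candidates N (type 'a), contests C (type 'c); the partition of N
into the sets N_c is given by the contest-map con (N_c = {i \<in> N. con i = c});
v c is the number of votes allowed in contest c.\<close>

definition cands :: "'a set \<Rightarrow> ('a \<Rightarrow> 'c) \<Rightarrow> 'c \<Rightarrow> 'a set" where
  "cands N con c = {i \<in> N. con i = c}"

definition ballots :: "'a set \<Rightarrow> 'c set \<Rightarrow> ('a \<Rightarrow> 'c) \<Rightarrow> ('c \<Rightarrow> nat) \<Rightarrow> 'a set set" where
  "ballots N C con v = {\<beta>. \<beta> \<subseteq> N \<and> (\<forall>c\<in>C. card (cands N con c \<inter> \<beta>) \<le> v c)}"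

definition Tstar :: "'a set \<Rightarrow> ('a \<Rightarrow> 'c) \<Rightarrow> ('c \<Rightarrow> nat) \<Rightarrow> 'a set list \<Rightarrow> 'a \<Rightarrow> nat" where
  "Tstar N con v deck = (\<lambda>i. if i \<in> N then
     sum_list (map (\<lambda>b. if i \<in> b \<and> card (cands N con (con i) \<inter> b) \<le> v (con i) then 1 else 0) deck)
     else 0)"

definition Tsig :: "'a set \<Rightarrow> ('a \<Rightarrow> 'c) \<Rightarrow> ('c \<Rightarrow> nat) \<Rightarrow> ('a \<Rightarrow> 'a) \<Rightarrow> 'a set list \<Rightarrow> 'a \<Rightarrow> nat" where
  "Tsig N con v \<sigma> deck = (\<lambda>i. if i \<in> N then
     sum_list (map (\<lambda>b. if \<sigma> i \<in> b \<and> card {\<sigma> j | j. j \<in> cands N con (con i) \<and> \<sigma> j \<in> b} \<le> v (con i) then 1 else 0) deck)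
     else 0)"

text \<open>Sigma: non-identity bijections of N (represented as functions that are the
identity outside N, so that each bijection of N has a unique representative).\<close>
definition Perms :: "'a set \<Rightarrow> ('a \<Rightarrow> 'a) set" where
  "Perms N = {\<sigma>. bij_betw \<sigma> N N \<and> (\<forall>i. i \<notin> N \<longrightarrow> \<sigma> i = i) \<and> (\<exists>i\<in>N. \<sigma> i \<noteq> i)}"

definition Fam :: "'a set \<Rightarrow> 'c set \<Rightarrow> ('a \<Rightarrow> 'c) \<Rightarrow> ('c \<Rightarrow> nat) \<Rightarrow> ('a \<Rightarrow> 'a) set \<Rightarrow> 'a set list set" where
  "Fam N C con v S = {deck. set deck \<subseteq> ballots N C con v \<and>
      (\<forall>\<tau>\<in>S. Tsig N con v \<tau> deck \<noteq> Tstar N con v deck)}"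

definition gverts :: "'a set \<Rightarrow> 'c set \<Rightarrow> ('a \<Rightarrow> 'c) \<Rightarrow> ('a \<Rightarrow> 'a) \<Rightarrow> 'c set" where
  "gverts N C con \<sigma> = {c \<in> C. \<exists>i\<in>cands N con c. \<sigma> i \<noteq> i}"

definition gedges :: "'a set \<Rightarrow> 'c set \<Rightarrow> ('a \<Rightarrow> 'c) \<Rightarrow> ('a \<Rightarrow> 'a) \<Rightarrow> ('c \<times> 'c) set" where
  "gedges N C con \<sigma> = {(c, c'). c \<in> C \<and> c' \<in> C \<and>
      (\<exists>i\<in>cands N con c. \<exists>i'\<in>cands N con c'. \<sigma> i = i' \<or> \<sigma> i' = i)}"

definition gcomps :: "'a set \<Rightarrow> 'c set \<Rightarrow> ('a \<Rightarrow> 'c) \<Rightarrow> ('a \<Rightarrow> 'a) \<Rightarrow> 'c set set" where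
  "gcomps N C con \<sigma> =
     (let V = gverts N C con \<sigma>;
          E = gedges N C con \<sigma> \<inter> (V \<times> V)
      in V // ((E \<union> E\<inverse>)\<^sup>* \<inter> (V \<times> V)))"

definition restr_perm :: "'a set \<Rightarrow> ('a \<Rightarrow> 'c) \<Rightarrow> ('a \<Rightarrow> 'a) \<Rightarrow> 'c set \<Rightarrow> 'a \<Rightarrow> 'a" where
  "restr_perm N con \<sigma> K = (\<lambda>i. if i \<in> N \<and> con i \<in> K then \<sigma> i else i)"

end

theory Submission
  imports Defs
begin

lemma Tsig_agree:
  assumes "\<forall>j\<in>cands N con (con i). f j = g j"
  shows "Tsig N con v f deck i = Tsig N con v g deck i"
proof (cases "i \<in> N")
  case True
  have fi: "f i = g i" using assms True by (simp add: cands_def)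
  have "\<And>b. {f j |j. j \<in> cands N con (con i) \<and> f j \<in> b} = {g j |j. j \<in> cands N con (con i) \<and> g j \<in> b}"
    using assms by (auto; metis)
  then show ?thesis using True fi unfolding Tsig_def by simp
qed (simp add: Tsig_def)

lemma Tsig_id:
  assumes "\<forall>j\<in>cands N con (con i). f j = j"
  shows "Tsig N con v f deck i = Tstar N con v deck i"
proof (cases "i \<in> N")
  case True
  have fi: "f i = i" using assms True by (simp add: cands_def)
  have "\<And>b. {f j |j. j \<in> cands N con (con i) \<and> f j \<in> b} = cands N con (con i) \<inter> b"
  proof (intro equalityI subsetI)
    fix b x assume "x \<in> cands N con (con i) \<inter> b"
    then show "x \<in> {f j |j. j \<in> cands N con (con i) \<and> f j \<in> b}" using assms by force
  qed (use assms in auto)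
  then show ?thesis using True fi unfolding Tsig_def Tstar_def by simp
qed (simp add: Tsig_def Tstar_def)

lemma PermsI: "bij_betw f N N \<Longrightarrow> \<forall>j. j \<notin> N \<longrightarrow> f j = j \<Longrightarrow> i \<in> N \<Longrightarrow> f i \<noteq> i \<Longrightarrow> f \<in> Perms N"
  unfolding Perms_def by blast

theorem theorem2:
  fixes N :: "'a set" and C :: "'c set" and con :: "'a \<Rightarrow> 'c" and v :: "'c \<Rightarrow> nat"
    and Shat :: "('a \<Rightarrow> 'a) set" and deck :: "'a set list" and \<sigma> :: "'a \<Rightarrow> 'a"
  assumes "finite N" and "finite C"
    and "con ` N \<subseteq> C"
    and "\<forall>c\<in>C. cands N con c \<noteq> {}"
    and "\<forall>c\<in>C. v c > 0"
    and "Shat \<subseteq> Perms N"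
    and "set deck \<subseteq> ballots N C con v"
    and "\<sigma> \<in> Perms N"
    and "Tsig N con v \<sigma> deck = Tstar N con v deck"
  shows "(\<forall>K\<in>gcomps N C con \<sigma>.
            restr_perm N con \<sigma> K \<in> Perms N \<and>
            Tsig N con v (restr_perm N con \<sigma> K) deck = Tstar N con v deck)
       \<and> (\<Union>K\<in>gcomps N C con \<sigma>. Fam N C con v (Shat \<union> {restr_perm N con \<sigma> K}))
           = Fam N C con v (Shat \<union> {\<sigma>})"
proof -
  define V where "V = gverts N C con \<sigma>"
  define E where "E = gedges N C con \<sigma> \<inter> (V \<times> V)"
  define R where "R = (E \<union> E\<inverse>)\<^sup>* \<inter> (V \<times> V)"
  have GC: "gcomps N C con \<sigma> = V // R" unfolding gcomps_def V_def E_def R_def Let_def by simp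
  have bij: "bij_betw \<sigma> N N" and outN: "\<And>i. i \<notin> N \<Longrightarrow> \<sigma> i = i"
    using assms(8) unfolding Perms_def by auto
  have injs: "inj_on \<sigma> N" using bij bij_betw_def by blast
  have sN: "\<And>i. i \<in> N \<Longrightarrow> \<sigma> i \<in> N" using bij bij_betwE by blast
  have conC: "\<And>i. i \<in> N \<Longrightarrow> con i \<in> C" using assms(3) by auto
  have cover: "\<And>c. c \<in> V \<Longrightarrow> \<exists>K\<in>gcomps N C con \<sigma>. c \<in> K"
  proof -
    fix c assume c: "c \<in> V"
    have "(c,c) \<in> R" using c unfolding R_def by auto
    then show "\<exists>K\<in>gcomps N C con \<sigma>. c \<in> K" using c unfolding GC quotient_def by blast
  qed
  have KV: "\<And>K. K \<in> gcomps N C con \<sigma> \<Longrightarrow> K \<subseteq> V"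
    unfolding GC quotient_def R_def by auto
  have closed: "\<And>K i. K \<in> gcomps N C con \<sigma> \<Longrightarrow> i \<in> N \<Longrightarrow> con i \<in> K \<Longrightarrow> con (\<sigma> i) \<in> K"
  proof -
    fix K i assume K: "K \<in> gcomps N C con \<sigma>" and i: "i \<in> N" "con i \<in> K"
    show "con (\<sigma> i) \<in> K"
    proof (cases "\<sigma> i = i")
      case True then show ?thesis using i by simp
    next
      case False
      obtain c0 where c0: "c0 \<in> V" and Kd: "K = R `` {c0}" using K unfolding GC by (auto elim: quotientE)
      have ciV: "con i \<in> V" using KV K i by auto
      have si: "\<sigma> i \<in> N" using sN i by simp
      have "\<sigma> (\<sigma> i) \<noteq> \<sigma> i"
      proof
        assume "\<sigma> (\<sigma> i) = \<sigma> i"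
        then have "\<sigma> i = i" using injs si i inj_onD by metis
        then show False using False by simp
      qed
      then have csV: "con (\<sigma> i) \<in> V" unfolding V_def gverts_def using si conC
        by (auto simp: cands_def)
      have "(con i, con (\<sigma> i)) \<in> gedges N C con \<sigma>"
        unfolding gedges_def using i si conC by (auto simp: cands_def)
      then have e: "(con i, con (\<sigma> i)) \<in> E" unfolding E_def using ciV csV by auto
      have "(c0, con i) \<in> (E \<union> E\<inverse>)\<^sup>*" using i Kd unfolding R_def by auto
      moreover have "(con i, con (\<sigma> i)) \<in> (E \<union> E\<inverse>)\<^sup>*" using e by auto
      ultimately have "(c0, con (\<sigma> i)) \<in> (E \<union> E\<inverse>)\<^sup>*" by (rule rtrancl_trans)
      then show ?thesis using Kd c0 csV unfolding R_def by auto
    qed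
  qed
  have perm: "\<And>K. K \<in> gcomps N C con \<sigma> \<Longrightarrow> restr_perm N con \<sigma> K \<in> Perms N"
  proof -
    fix K assume K: "K \<in> gcomps N C con \<sigma>"
    let ?f = "restr_perm N con \<sigma> K"
    have into: "?f ` N \<subseteq> N" using sN unfolding restr_perm_def by auto
    have inj: "inj_on ?f N"
    proof (rule inj_onI)
      fix x y assume x: "x \<in> N" and y: "y \<in> N" and eq: "?f x = ?f y"
      show "x = y"
      proof (cases "con x \<in> K"; cases "con y \<in> K")
        assume "con x \<in> K" "con y \<in> K"
        then show ?thesis using eq x y injs unfolding restr_perm_def by (auto dest: inj_onD)
      next
        assume a: "con x \<in> K" "con y \<notin> K"
        then have "con (\<sigma> x) \<in> K" using closed K x by blast
        then show ?thesis using eq x y a unfolding restr_perm_def by auto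
      next
        assume a: "con x \<notin> K" "con y \<in> K"
        then have "con (\<sigma> y) \<in> K" using closed K y by blast
        then show ?thesis using eq x y a unfolding restr_perm_def by auto
      next
        assume "con x \<notin> K" "con y \<notin> K"
        then show ?thesis using eq x y unfolding restr_perm_def by auto
      qed
    qed
    have "?f ` N = N" using endo_inj_surj[OF assms(1) into inj] .
    then have b: "bij_betw ?f N N" using inj bij_betw_def by blast
    obtain c0 where c0: "c0 \<in> V" and Kd: "K = R `` {c0}" using K unfolding GC by (auto elim: quotientE)
    have "c0 \<in> K" using c0 Kd unfolding R_def by auto
    then obtain i where i: "i \<in> N" "con i = c0" "\<sigma> i \<noteq> i"
      using c0 unfolding V_def gverts_def cands_def by auto
    have "?f i \<noteq> i" using i \<open>c0 \<in> K\<close> unfolding restr_perm_def by auto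
    have "\<forall>j. j \<notin> N \<longrightarrow> ?f j = j" unfolding restr_perm_def by auto
    then show "?f \<in> Perms N" using PermsI[OF b _ i(1) \<open>?f i \<noteq> i\<close>] by blast
  qed
  have iff: "\<And>d. (Tsig N con v \<sigma> d = Tstar N con v d) \<longleftrightarrow>
      (\<forall>K\<in>gcomps N C con \<sigma>. Tsig N con v (restr_perm N con \<sigma> K) d = Tstar N con v d)"
  proof -
    fix d
    have inK: "\<And>K i. con i \<in> K \<Longrightarrow> Tsig N con v (restr_perm N con \<sigma> K) d i = Tsig N con v \<sigma> d i"
      by (rule Tsig_agree) (auto simp: cands_def restr_perm_def)
    have outK: "\<And>K i. con i \<notin> K \<Longrightarrow> Tsig N con v (restr_perm N con \<sigma> K) d i = Tstar N con v d i"
      by (rule Tsig_id) (auto simp: cands_def restr_perm_def)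
    have outV: "\<And>i. i \<in> N \<Longrightarrow> con i \<notin> V \<Longrightarrow> Tsig N con v \<sigma> d i = Tstar N con v d i"
    proof -
      fix i assume i: "i \<in> N" "con i \<notin> V"
      show "Tsig N con v \<sigma> d i = Tstar N con v d i"
        by (rule Tsig_id) (use i conC in \<open>auto simp: V_def gverts_def cands_def\<close>)
    qed
    have notN: "\<And>f i. i \<notin> N \<Longrightarrow> Tsig N con v f d i = Tstar N con v d i"
      by (simp add: Tsig_def Tstar_def)
    show "?thesis d"
    proof
      assume h: "Tsig N con v \<sigma> d = Tstar N con v d"
      show "\<forall>K\<in>gcomps N C con \<sigma>. Tsig N con v (restr_perm N con \<sigma> K) d = Tstar N con v d"
      proof (intro ballI ext)
        fix K i
        show "Tsig N con v (restr_perm N con \<sigma> K) d i = Tstar N con v d i"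
          using inK[of i K] outK[of i K] h by (cases "con i \<in> K") auto
      qed
    next
      assume h: "\<forall>K\<in>gcomps N C con \<sigma>. Tsig N con v (restr_perm N con \<sigma> K) d = Tstar N con v d"
      show "Tsig N con v \<sigma> d = Tstar N con v d"
      proof (rule ext)
        fix i
        show "Tsig N con v \<sigma> d i = Tstar N con v d i"
        proof (cases "i \<in> N")
          case False then show ?thesis using notN by simp
        next
          case True
          show ?thesis
          proof (cases "con i \<in> V")
            case False then show ?thesis using outV True by simp
          next
            case cV: True
            then obtain K where K: "K \<in> gcomps N C con \<sigma>" "con i \<in> K" using cover by blast
            then show ?thesis using h inK[of i K] by (metis)
          qed
        qed
      qed
    qed
  qed
  have ne: "gcomps N C con \<sigma> \<noteq> {}"
  proof -
    obtain i where "i \<in> N" "\<sigma> i \<noteq> i" using assms(8) unfolding Perms_def by auto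
    then have "con i \<in> V" using conC unfolding V_def gverts_def cands_def by auto
    then show ?thesis using cover by blast
  qed
  show ?thesis
  proof (intro conjI ballI)
    fix K assume "K \<in> gcomps N C con \<sigma>"
    then show "restr_perm N con \<sigma> K \<in> Perms N" using perm by blast
  next
    fix K assume "K \<in> gcomps N C con \<sigma>"
    then show "Tsig N con v (restr_perm N con \<sigma> K) deck = Tstar N con v deck"
      using iff assms(9) by blast
  next
    show "(\<Union>K\<in>gcomps N C con \<sigma>. Fam N C con v (Shat \<union> {restr_perm N con \<sigma> K}))
           = Fam N C con v (Shat \<union> {\<sigma>})"
    proof (intro equalityI subsetI)
      fix d assume "d \<in> (\<Union>K\<in>gcomps N C con \<sigma>. Fam N C con v (Shat \<union> {restr_perm N con \<sigma> K}))"
      then obtain K where K: "K \<in> gcomps N C con \<sigma>" and d: "d \<in> Fam N C con v (Shat \<union> {restr_perm N con \<sigma> K})"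
        by blast
      have "Tsig N con v \<sigma> d \<noteq> Tstar N con v d"
        using iff[of d] K d unfolding Fam_def by auto
      then show "d \<in> Fam N C con v (Shat \<union> {\<sigma>})" using d unfolding Fam_def by auto
    next
      fix d assume d: "d \<in> Fam N C con v (Shat \<union> {\<sigma>})"
      then have "Tsig N con v \<sigma> d \<noteq> Tstar N con v d" unfolding Fam_def by auto
      then obtain K where K: "K \<in> gcomps N C con \<sigma>" and
        ne': "Tsig N con v (restr_perm N con \<sigma> K) d \<noteq> Tstar N con v d"
        using iff[of d] by blast
      have "d \<in> Fam N C con v (Shat \<union> {restr_perm N con \<sigma> K})"
        using d ne' unfolding Fam_def by auto
      then show "d \<in> (\<Union>K\<in>gcomps N C con \<sigma>. Fam N C con v (Shat \<union> {restr_perm N con \<sigma> K}))"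
        using K by blast
    qed
  qed
qed

end
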